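(* (a) For any ultrafilter $x\in I$ and any $n\in\mathbb{N}$, there exists an ultrafilter $y\in\overline{L_n}$ such that $y\,\tilde{\mid}\,x$. (b) For any $n\in\mathbb{N}$ and any ultrafilter $x\in L_n^*$, there exists an ultrafilter $y\in I$ such that $x\,\tilde{\mid}\,y$. (c) There exist ultrafilters $x\in I$ and $y\in I$ such that $y\,\tilde{\mid}\,x$.
   Context: $\mathbb{N}=\{1,2,3,\dots\}$; $\beta\mathbb{N}$ is the set of ultrafilters on $\mathbb{N}$ (Stone–Čech compactification, naturals identified with principal ultrafilters). For $A\subseteq\mathbb{N}$, $\overline{A}=\{x\in\beta\mathbb{N}:A\in x\}$ and $A^*=\overline{A}\setminus A$. $P$ is the set of primes, $L_0=\{1\}$, $L_n=\{a_1\cdots a_n:a_i\in P\}$. $I=\bigcap_{i=0}^\infty\overline{\mathbb{N}\setminus L_i}$ (ultrafilters containing none of the $L_i$). For $x,y\in\beta\mathbb{N}$, $x\,\tilde{\mid}\,y$ iff for every $A\in x$ the set $\{k\in\mathbb{N}:\exists a\in A,\ a\mid k\}$ belongs to $y$. *)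

theory Defs
  imports Main "HOL-Computational_Algebra.Primes"
begin

text \<open>The natural numbers N = {1,2,3,...} as a subset of type nat.\<close>
definition Npos :: "nat set" where
  "Npos = {n. 0 < n}"

text \<open>Ultrafilters on N, represented as families of subsets of N (points of beta N).\<close>
definition is_ultrafilter :: "nat set set \<Rightarrow> bool" where
  "is_ultrafilter U \<longleftrightarrow>
     U \<subseteq> Pow Npos \<and> Npos \<in> U \<and> {} \<notin> U \<and>
     (\<forall>A B. A \<in> U \<and> B \<in> U \<longrightarrow> A \<inter> B \<in> U) \<and>
     (\<forall>A B. A \<in> U \<and> A \<subseteq> B \<and> B \<subseteq> Npos \<longrightarrow> B \<in> U) \<and>
     (\<forall>A. A \<subseteq> Npos \<longrightarrow> A \<in> U \<or> Npos - A \<in> U)"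

definition betaN :: "nat set set set" where
  "betaN = {U. is_ultrafilter U}"

text \<open>The principal ultrafilter generated by k (identification of N inside beta N).\<close>
definition principal :: "nat \<Rightarrow> nat set set" where
  "principal k = {A. A \<subseteq> Npos \<and> k \<in> A}"

definition ucl :: "nat set \<Rightarrow> nat set set set" where
  "ucl A = {x \<in> betaN. A \<in> x}"

definition ustar :: "nat set \<Rightarrow> nat set set set" where
  "ustar A = ucl A - principal ` A"

text \<open>L_n: products of exactly n primes (with multiplicity); L_0 = {1}.\<close>
definition L :: "nat \<Rightarrow> nat set" where
  "L n = {k. \<exists>as. length as = n \<and> (\<forall>a\<in>set as. prime a) \<and> k = prod_list as}"

definition Iset :: "nat set set set" where
  "Iset = (\<Inter>i. ucl (Npos - L i))"

definition dvd_up :: "nat set \<Rightarrow> nat set" where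
  "dvd_up A = {k \<in> Npos. \<exists>a\<in>A. a dvd k}"

definition udvd :: "nat set set \<Rightarrow> nat set set \<Rightarrow> bool" where
  "udvd x y \<longleftrightarrow> (\<forall>A\<in>x. dvd_up A \<in> y)"

end

theory Submission
  imports Defs "HOL-Computational_Algebra.Primes"
begin


definition Om :: "nat \<Rightarrow> nat" where "Om k = size (prime_factorization k)"

lemma L_char: "L i = {k. 0 < k \<and> Om k = i}"
proof (intro set_eqI iffI)
  fix k assume "k \<in> L i"
  then obtain as where as: "length as = i" "\<forall>a\<in>set as. prime a" "k = prod_list as"
    unfolding L_def by blast
  have pk: "k = prod_mset (mset as)" using as(3) by (simp add: prod_mset_prod_list)
  have "prime_factorization k = mset as"
    unfolding pk by (rule prime_factorization_prod_mset_primes) (use as(2) in auto)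
  moreover have "0 \<notin> set as" using as(2) by auto
  hence "k \<noteq> 0" using as(3) by (simp add: prod_list_zero_iff)
  ultimately show "k \<in> {k. 0 < k \<and> Om k = i}" using as(1) by (simp add: Om_def)
next
  fix k assume "k \<in> {k. 0 < k \<and> Om k = i}"
  hence k: "k > 0" "Om k = i" by auto
  define as where "as = sorted_list_of_multiset (prime_factorization k)"
  have m: "mset as = prime_factorization k" unfolding as_def by simp
  have "length as = i" using k(2) unfolding Om_def m[symmetric] by simp
  moreover have "set as = prime_factors k" using m by (metis set_mset_mset)
  hence "\<forall>a\<in>set as. prime a" by (auto intro: in_prime_factors_imp_prime)
  moreover have "prod_list as = prod_mset (prime_factorization k)"
    by (simp add: prod_mset_prod_list[symmetric] m)
  hence "k = prod_list as" using k(1) by (simp add: prod_mset_prime_factorization)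
  ultimately show "k \<in> L i" unfolding L_def by blast
qed

lemma Om_mult: "a > 0 \<Longrightarrow> b > 0 \<Longrightarrow> Om (a*b) = Om a + Om b"
  unfolding Om_def by (simp add: prime_factorization_mult)

lemma Om_pow2: "Om (2^m) = m"
  unfolding Om_def by (simp add: prime_factorization_prime_power)

lemma Om_divisor: assumes "k > 0" "n \<le> Om k" shows "\<exists>d. d dvd k \<and> d > 0 \<and> Om d = n"
proof -
  define as where "as = sorted_list_of_multiset (prime_factorization k)"
  have m: "mset as = prime_factorization k" unfolding as_def by simp
  define d where "d = prod_mset (mset (take n as))"
  have sub: "mset (take n as) \<subseteq># mset as"
    by (metis append_take_drop_id mset_append mset_subset_eq_add_left)
  have "d dvd prod_mset (prime_factorization k)" unfolding d_def m[symmetric]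
    by (rule prod_mset_subset_imp_dvd[OF sub])
  hence dk: "d dvd k" using assms(1) by (simp add: prod_mset_prime_factorization)
  have pr: "\<And>p. p \<in># mset (take n as) \<Longrightarrow> prime p"
  proof -
    fix p assume "p \<in># mset (take n as)"
    hence "p \<in># prime_factorization k" using sub m by (metis mset_subset_eqD)
    thus "prime p" by (rule in_prime_factors_imp_prime)
  qed
  have pf: "prime_factorization d = mset (take n as)" unfolding d_def
    using pr by (rule prime_factorization_prod_mset_primes)
  have las: "length as = Om k" unfolding Om_def m[symmetric] by simp
  have lt: "length (take n as) = n" using assms(2) las by simp
  have "Om d = n" unfolding Om_def pf using lt by (simp only: size_mset)
  moreover have "d \<noteq> 0" using dk assms(1) by (metis dvd_0_left_iff not_gr0)
  ultimately show ?thesis using dk by blast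
qed

definition fip :: "nat set set \<Rightarrow> bool" where
  "fip H \<longleftrightarrow> (\<forall>G. finite G \<and> G \<subseteq> H \<longrightarrow> Npos \<inter> \<Inter>G \<noteq> {})"

lemma fip_chain:
  assumes "C \<noteq> {}" "subset.chain {H. H \<subseteq> Pow Npos \<and> F \<subseteq> H \<and> fip H} C"
  shows "\<Union>C \<in> {H. H \<subseteq> Pow Npos \<and> F \<subseteq> H \<and> fip H}"
proof -
  have sub: "C \<subseteq> {H. H \<subseteq> Pow Npos \<and> F \<subseteq> H \<and> fip H}" using assms(2) by (simp add: subset_chain_def)
  have "fip (\<Union>C)" unfolding fip_def
  proof (intro allI impI)
    fix G assume G: "finite G \<and> G \<subseteq> \<Union>C"
    then obtain H where "H \<in> C" "G \<subseteq> H"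
      using finite_subset_Union_chain[of G C "{H. H \<subseteq> Pow Npos \<and> F \<subseteq> H \<and> fip H}"] assms by blast
    thus "Npos \<inter> \<Inter>G \<noteq> {}" using sub G unfolding fip_def by blast
  qed
  thus ?thesis using sub assms(1) by blast
qed

lemma fipD: "fip H \<Longrightarrow> finite G \<Longrightarrow> G \<subseteq> H \<Longrightarrow> Npos \<inter> \<Inter>G \<noteq> {}"
  unfolding fip_def by blast

lemma ultrafilter_exists:
  assumes "F \<subseteq> Pow Npos" "fip F"
  shows "\<exists>U. is_ultrafilter U \<and> F \<subseteq> U"
proof -
  let ?A = "{H. H \<subseteq> Pow Npos \<and> F \<subseteq> H \<and> fip H}"
  have "F \<in> ?A" using assms by simp
  hence "?A \<noteq> {}" by blast
  from subset_Zorn_nonempty[OF this fip_chain]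
  obtain M where M: "M \<in> ?A" and maxA: "\<forall>X\<in>?A. M \<subseteq> X \<longrightarrow> X = M"
    by blast
  have MP: "M \<subseteq> Pow Npos" and FM: "F \<subseteq> M" and fM: "fip M" using M by auto
  have add: "B \<in> M" if "B \<subseteq> Npos" "fip (insert B M)" for B
  proof -
    have iA: "insert B M \<in> ?A" using that MP FM by blast
    have "insert B M = M" using maxA[rule_format, OF iA subset_insertI] .
    thus ?thesis by blast
  qed
  have fip_ins: "fip (insert B M)" if "\<And>G. finite G \<Longrightarrow> G \<subseteq> M \<Longrightarrow> Npos \<inter> B \<inter> \<Inter>G \<noteq> {}" for B
    unfolding fip_def
  proof (intro allI impI)
    fix G assume G: "finite G \<and> G \<subseteq> insert B M"
    show "Npos \<inter> \<Inter>G \<noteq> {}"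
    proof (cases "B \<in> G")
      case True
      have e: "\<Inter>G = B \<inter> \<Inter>(G - {B})" using True by blast
      have "G - {B} \<subseteq> M" "finite (G - {B})" using G by auto
      hence "Npos \<inter> B \<inter> \<Inter>(G - {B}) \<noteq> {}" using that[of "G - {B}"] by simp
      thus ?thesis unfolding e by (simp add: Int_assoc)
    next
      case False
      hence "G \<subseteq> M" using G by blast
      thus ?thesis using fipD[OF fM] G by blast
    qed
  qed
  have notfip: "\<exists>G. finite G \<and> G \<subseteq> M \<and> Npos \<inter> B \<inter> \<Inter>G = {}" if "\<not> fip (insert B M)" for B
  proof (rule ccontr)
    assume "\<not> ?thesis"
    hence "\<And>G. finite G \<Longrightarrow> G \<subseteq> M \<Longrightarrow> Npos \<inter> B \<inter> \<Inter>G \<noteq> {}" by auto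
    hence "fip (insert B M)" by (rule fip_ins)
    thus False using that by simp
  qed
  have U1: "Npos \<in> M"
  proof (rule add)
    show "Npos \<subseteq> Npos" by simp
    show "fip (insert Npos M)"
    proof (rule fip_ins)
      fix G assume "finite G" "G \<subseteq> M"
      hence "Npos \<inter> \<Inter>G \<noteq> {}" using fipD[OF fM] by blast
      thus "Npos \<inter> Npos \<inter> \<Inter>G \<noteq> {}" by simp
    qed
  qed
  have U2: "{} \<notin> M"
  proof
    assume "{} \<in> M"
    hence "{{}} \<subseteq> M" by simp
    hence "Npos \<inter> \<Inter>{{}} \<noteq> {}" using fipD[OF fM, of "{{}}"] by simp
    thus False by simp
  qed
  have U3: "A \<inter> B \<in> M" if "A \<in> M" "B \<in> M" for A B
  proof (rule add)
    show "A \<inter> B \<subseteq> Npos" using that MP by blast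
    show "fip (insert (A \<inter> B) M)"
    proof (rule fip_ins)
      fix G assume G: "finite G" "G \<subseteq> M"
      have "finite (insert A (insert B G))" using G by simp
      moreover have "insert A (insert B G) \<subseteq> M" using G that by simp
      ultimately have "Npos \<inter> \<Inter>(insert A (insert B G)) \<noteq> {}" using fipD[OF fM] by blast
      moreover have "\<Inter>(insert A (insert B G)) = (A \<inter> B) \<inter> \<Inter>G" by auto
      ultimately show "Npos \<inter> (A \<inter> B) \<inter> \<Inter>G \<noteq> {}" by (simp add: Int_assoc)
    qed
  qed
  have U4: "B \<in> M" if "A \<in> M" "A \<subseteq> B" "B \<subseteq> Npos" for A B
  proof (rule add)
    show "B \<subseteq> Npos" by fact
    show "fip (insert B M)"
    proof (rule fip_ins)
      fix G assume G: "finite G" "G \<subseteq> M"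
      have "finite (insert A G)" using G by simp
      moreover have "insert A G \<subseteq> M" using G that by simp
      ultimately have "Npos \<inter> \<Inter>(insert A G) \<noteq> {}" using fipD[OF fM] by blast
      moreover have "Npos \<inter> \<Inter>(insert A G) \<subseteq> Npos \<inter> B \<inter> \<Inter>G" using that(2) by auto
      ultimately show "Npos \<inter> B \<inter> \<Inter>G \<noteq> {}" by blast
    qed
  qed
  have U5: "A \<in> M \<or> Npos - A \<in> M" if "A \<subseteq> Npos" for A
  proof (rule ccontr)
    assume c: "\<not> ?thesis"
    have nf1: "\<not> fip (insert A M)" using add that c by blast
    obtain G1 where G1: "finite G1 \<and> G1 \<subseteq> M \<and> Npos \<inter> A \<inter> \<Inter>G1 = {}"
      using notfip[OF nf1] by (elim exE) assumption
    have "Npos - A \<subseteq> Npos" by blast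
    hence nf2: "\<not> fip (insert (Npos - A) M)" using add c by blast
    obtain G2 where G2: "finite G2 \<and> G2 \<subseteq> M \<and> Npos \<inter> (Npos - A) \<inter> \<Inter>G2 = {}"
      using notfip[OF nf2] by (elim exE) assumption
    have "finite (G1 \<union> G2)" "G1 \<union> G2 \<subseteq> M" using G1 G2 by auto
    hence "Npos \<inter> \<Inter>(G1 \<union> G2) \<noteq> {}" using fipD[OF fM] by blast
    moreover have "Npos \<inter> \<Inter>(G1 \<union> G2) \<subseteq> (Npos \<inter> A \<inter> \<Inter>G1) \<union> (Npos \<inter> (Npos - A) \<inter> \<Inter>G2)" by auto
    hence "Npos \<inter> \<Inter>(G1 \<union> G2) = {}" using G1 G2 by simp
    ultimately show False by blast
  qed
  have "is_ultrafilter M" unfolding is_ultrafilter_def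
  proof (intro conjI allI impI)
    show "M \<subseteq> Pow Npos" by fact
    show "Npos \<in> M" by fact
    show "{} \<notin> M" by fact
    show "A \<inter> B \<in> M" if "A \<in> M \<and> B \<in> M" for A B using U3 that by blast
    show "B \<in> M" if "A \<in> M \<and> A \<subseteq> B \<and> B \<subseteq> Npos" for A B using U4 that by blast
    show "A \<in> M \<or> Npos - A \<in> M" if "A \<subseteq> Npos" for A using U5 that by blast
  qed
  thus ?thesis using FM by blast
qed


lemma ufP: "is_ultrafilter U \<Longrightarrow> U \<subseteq> Pow Npos" unfolding is_ultrafilter_def by (elim conjE)
lemma ufN: "is_ultrafilter U \<Longrightarrow> Npos \<in> U" unfolding is_ultrafilter_def by (elim conjE)
lemma ufE: "is_ultrafilter U \<Longrightarrow> {} \<notin> U" unfolding is_ultrafilter_def by (elim conjE)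
lemma ufI: "is_ultrafilter U \<Longrightarrow> A \<in> U \<Longrightarrow> B \<in> U \<Longrightarrow> A \<inter> B \<in> U"
  unfolding is_ultrafilter_def by (elim conjE) (erule allE, erule allE, erule mp, rule conjI)
lemma ufM: "is_ultrafilter U \<Longrightarrow> A \<in> U \<Longrightarrow> A \<subseteq> B \<Longrightarrow> B \<subseteq> Npos \<Longrightarrow> B \<in> U"
  unfolding is_ultrafilter_def by (elim conjE) (erule allE, erule allE, erule mp, simp)
lemma ufC: "is_ultrafilter U \<Longrightarrow> A \<subseteq> Npos \<Longrightarrow> A \<in> U \<or> Npos - A \<in> U"
  unfolding is_ultrafilter_def by (elim conjE) (erule allE, erule mp)

lemma uf_sub: "is_ultrafilter U \<Longrightarrow> A \<in> U \<Longrightarrow> A \<subseteq> Npos"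
  using ufP by blast

lemma uf_compl: assumes u: "is_ultrafilter U" and A: "A \<subseteq> Npos" shows "(Npos - A \<in> U) \<longleftrightarrow> A \<notin> U"
proof
  assume c: "Npos - A \<in> U"
  show "A \<notin> U"
  proof
    assume "A \<in> U"
    hence "A \<inter> (Npos - A) \<in> U" using ufI[OF u _ c] by blast
    moreover have "A \<inter> (Npos - A) = {}" by blast
    ultimately show False using ufE[OF u] by simp
  qed
next
  assume "A \<notin> U" thus "Npos - A \<in> U" using ufC[OF u A] by blast
qed

lemma uf_union: assumes u: "is_ultrafilter U" and s: "A \<subseteq> Npos" "B \<subseteq> Npos" and n: "A \<notin> U" "B \<notin> U"
  shows "A \<union> B \<notin> U"
proof
  assume ab: "A \<union> B \<in> U"
  have c: "Npos - A \<in> U" "Npos - B \<in> U" using uf_compl[OF u] s n by auto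
  have "(Npos - A) \<inter> (Npos - B) \<inter> (A \<union> B) \<in> U" using ufI[OF u ufI[OF u c] ab] .
  moreover have "(Npos - A) \<inter> (Npos - B) \<inter> (A \<union> B) = {}" by blast
  ultimately show False using ufE[OF u] by simp
qed

lemma uf_inter: assumes G: "finite G" and u: "is_ultrafilter U" shows "G \<subseteq> U \<Longrightarrow> Npos \<inter> \<Inter>G \<in> U"
  using G
proof (induction G rule: finite_induct)
  case empty thus ?case using ufN[OF u] by simp
next
  case (insert A G)
  hence "A \<inter> (Npos \<inter> \<Inter>G) \<in> U" using ufI[OF u] by simp
  thus ?case by (simp add: Int_left_commute)
qed

lemma uf_nonempty: "is_ultrafilter U \<Longrightarrow> A \<in> U \<Longrightarrow> A \<noteq> {}"
  using ufE by blast

lemma Npos_L: "Npos - L i = {k. 0 < k \<and> Om k \<noteq> i}"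
  unfolding L_char Npos_def by auto

lemma dvd_up_sub: "dvd_up A \<subseteq> Npos" unfolding dvd_up_def by auto

lemma partB: assumes u: "is_ultrafilter u" shows "\<exists>v\<in>Iset. udvd u v"
proof -
  let ?F = "dvd_up ` u \<union> range (\<lambda>i. Npos - L i)"
  have fF: "fip ?F" unfolding fip_def
  proof (intro allI impI)
    fix G assume G: "finite G \<and> G \<subseteq> ?F"
    obtain GA where GA: "GA \<subseteq> u" "finite GA" "G \<inter> dvd_up ` u = dvd_up ` GA"
      using finite_subset_image[of "G \<inter> dvd_up ` u" dvd_up u] G by auto
    obtain Is where Is: "finite Is" "G \<inter> range (\<lambda>i. Npos - L i) = (\<lambda>i. Npos - L i) ` Is"
      using finite_subset_image[of "G \<inter> range (\<lambda>i. Npos - L i)" "\<lambda>i. Npos - L i" UNIV] G by auto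
    have "Npos \<inter> \<Inter>GA \<in> u" using uf_inter[OF GA(2) u GA(1)] .
    then obtain a where a: "a \<in> Npos" "\<forall>A\<in>GA. a \<in> A" using uf_nonempty[OF u] by blast
    define m where "m = Suc (Max (insert 0 Is))"
    define k where "k = a * 2^m"
    have a0: "a > 0" using a unfolding Npos_def by auto
    have k0: "k > 0" unfolding k_def using a0 by simp
    have Omk: "Om k = Om a + m" unfolding k_def using a0 by (simp add: Om_mult Om_pow2)
    have "i < m" if "i \<in> Is" for i unfolding m_def using Is(1) that
      by (simp add: le_imp_less_Suc)
    hence "k \<in> Npos - L i" if "i \<in> Is" for i using that k0 Omk unfolding Npos_L by fastforce
    moreover have "k \<in> dvd_up A" if "A \<in> GA" for A
    proof -
      have "a dvd k" unfolding k_def by simp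
      moreover have "a \<in> A" using a that by blast
      ultimately show ?thesis using k0 unfolding dvd_up_def Npos_def by blast
    qed
    moreover have "k \<in> Npos" using k0 by (simp add: Npos_def)
    moreover have "G = (G \<inter> dvd_up ` u) \<union> (G \<inter> range (\<lambda>i. Npos - L i))" using G by blast
    ultimately have "k \<in> Npos \<inter> \<Inter>G" using GA(3) Is(2) by auto
    thus "Npos \<inter> \<Inter>G \<noteq> {}" by blast
  qed
  have pF: "?F \<subseteq> Pow Npos" using dvd_up_sub by auto
  obtain v where v: "is_ultrafilter v \<and> ?F \<subseteq> v" using ultrafilter_exists[OF pF fF] by (elim exE) assumption
  have "v \<in> Iset" unfolding Iset_def ucl_def betaN_def using v by auto
  moreover have "udvd u v" unfolding udvd_def using v by auto
  ultimately show ?thesis by blast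
qed

lemma Npos_cover: "Npos \<subseteq> (\<Union>i<n. L i) \<union> dvd_up (L n)"
proof
  fix k assume k: "k \<in> Npos"
  hence k0: "k > 0" by (simp add: Npos_def)
  show "k \<in> (\<Union>i<n. L i) \<union> dvd_up (L n)"
  proof (cases "Om k < n")
    case True thus ?thesis using k0 unfolding L_char by auto
  next
    case False
    hence nle: "n \<le> Om k" by simp
    obtain d where "d dvd k \<and> d > 0 \<and> Om d = n" using Om_divisor[OF k0 nle] by (elim exE) assumption
    thus ?thesis using k unfolding dvd_up_def L_char by auto
  qed
qed

lemma L_sub: "L i \<subseteq> Npos" unfolding L_char Npos_def by auto

lemma union_L_notin: assumes "x \<in> Iset" shows "(\<Union>i<n. L i) \<notin> x"
proof (induction n)
  case 0
  have "is_ultrafilter x" using assms unfolding Iset_def ucl_def betaN_def by auto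
  thus ?case using ufE by simp
next
  case (Suc n)
  have u: "is_ultrafilter x" using assms unfolding Iset_def ucl_def betaN_def by auto
  have "Npos - L n \<in> x" using assms unfolding Iset_def ucl_def by auto
  hence "L n \<notin> x" using uf_compl[OF u L_sub] by blast
  moreover have "(\<Union>i<Suc n. L i) = (\<Union>i<n. L i) \<union> L n" by (auto simp: lessThan_Suc)
  moreover have "(\<Union>i<n. L i) \<subseteq> Npos" using L_sub by blast
  ultimately show ?case using uf_union[OF u _ L_sub, of "\<Union>i<n. L i" n] Suc by simp
qed

lemma partA: assumes xI: "x \<in> Iset" shows "\<exists>y\<in>ucl (L n). udvd y x"
proof -
  have u: "is_ultrafilter x" using xI unfolding Iset_def ucl_def betaN_def by auto
  have dL: "dvd_up (L n) \<in> x"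
  proof (rule ccontr)
    assume dn: "dvd_up (L n) \<notin> x"
    have sU: "(\<Union>i<n. L i) \<subseteq> Npos" using L_sub by blast
    have "(\<Union>i<n. L i) \<union> dvd_up (L n) \<notin> x"
      using uf_union[OF u sU dvd_up_sub union_L_notin[OF xI] dn] .
    moreover have "(\<Union>i<n. L i) \<union> dvd_up (L n) \<subseteq> Npos" using L_sub dvd_up_sub by blast
    moreover have "(\<Union>i<n. L i) \<union> dvd_up (L n) = Npos" using calculation(2) Npos_cover by (rule subset_antisym)
    ultimately show False using ufN[OF u] by simp
  qed
  define S where "S = {A. A \<subseteq> Npos \<and> dvd_up A \<notin> x}"
  define f where "f = (\<lambda>A::nat set. Npos - A)"
  have Sun: "\<Union>G' \<in> S" if "finite G'" "G' \<subseteq> S" for G'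
    using that
  proof (induction G' rule: finite_induct)
    case empty
    have "dvd_up {} = {}" unfolding dvd_up_def by auto
    thus ?case using ufE[OF u] by (simp add: S_def)
  next
    case (insert A G')
    have A: "A \<subseteq> Npos" "dvd_up A \<notin> x" using insert(4) by (simp_all add: S_def)
    have "\<Union>G' \<in> S" using insert by simp
    hence G: "\<Union>G' \<subseteq> Npos" "dvd_up (\<Union>G') \<notin> x" by (simp_all add: S_def)
    have "dvd_up (A \<union> \<Union>G') = dvd_up A \<union> dvd_up (\<Union>G')" unfolding dvd_up_def by auto
    moreover have "dvd_up A \<union> dvd_up (\<Union>G') \<notin> x"
      using uf_union[OF u dvd_up_sub dvd_up_sub A(2) G(2)] .
    moreover have "A \<union> \<Union>G' \<subseteq> Npos" using A G by simp
    ultimately show ?case by (simp add: S_def)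
  qed
  define F where "F = insert (L n) (f ` S)"
  have fF: "fip F" unfolding fip_def
  proof (intro allI impI)
    fix G assume G: "finite G \<and> G \<subseteq> F"
    have G1: "G - {L n} \<subseteq> f ` S"
    proof
      fix C assume "C \<in> G - {L n}"
      thus "C \<in> f ` S" using G unfolding F_def by blast
    qed
    have G2: "finite (G - {L n})" using G by simp
    obtain G' where G': "G' \<subseteq> S \<and> finite G' \<and> G - {L n} = f ` G'"
      using finite_subset_image[OF G2 G1] by (elim exE) assumption
    have B: "\<Union>G' \<in> S" using Sun G' by blast
    hence B2: "dvd_up (\<Union>G') \<notin> x" by (simp add: S_def)
    have "\<not> L n \<subseteq> \<Union>G'"
    proof
      assume "L n \<subseteq> \<Union>G'"
      hence "dvd_up (L n) \<subseteq> dvd_up (\<Union>G')" unfolding dvd_up_def by blast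
      hence "dvd_up (\<Union>G') \<in> x" using ufM[OF u dL _ dvd_up_sub] by blast
      thus False using B2 by contradiction
    qed
    then obtain k where k: "k \<in> L n" "k \<notin> \<Union>G'" by blast
    have kN: "k \<in> Npos" using k L_sub by blast
    have "k \<in> C" if "C \<in> G" for C
    proof (cases "C = L n")
      case True thus ?thesis using k by simp
    next
      case False
      hence "C \<in> f ` G'" using that G' by blast
      then obtain A where "A \<in> G'" "C = Npos - A" unfolding f_def by blast
      thus ?thesis using k kN by blast
    qed
    hence "k \<in> Npos \<inter> \<Inter>G" using kN by blast
    thus "Npos \<inter> \<Inter>G \<noteq> {}" by blast
  qed
  have pF: "F \<subseteq> Pow Npos" unfolding F_def f_def using L_sub by blast
  obtain y where y0: "is_ultrafilter y \<and> F \<subseteq> y" using ultrafilter_exists[OF pF fF] by (elim exE) assumption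
  have y: "is_ultrafilter y" "F \<subseteq> y" using y0 by simp_all
  have "y \<in> ucl (L n)" using y unfolding ucl_def betaN_def F_def by simp
  moreover have "udvd y x" unfolding udvd_def
  proof
    fix A assume A: "A \<in> y"
    have As: "A \<subseteq> Npos" using uf_sub[OF y(1) A] .
    show "dvd_up A \<in> x"
    proof (rule ccontr)
      assume "dvd_up A \<notin> x"
      hence "A \<in> S" using As by (simp add: S_def)
      hence "f A \<in> F" unfolding F_def by blast
      hence "Npos - A \<in> y" using y(2) unfolding f_def by blast
      thus False using uf_compl[OF y(1) As] A by blast
    qed
  qed
  ultimately show ?thesis by blast
qed

theorem theorem3p5:
  shows "(\<forall>x\<in>Iset. \<forall>n\<in>Npos. \<exists>y\<in>ucl (L n). udvd y x)
       \<and> (\<forall>n\<in>Npos. \<forall>x\<in>ustar (L n). \<exists>y\<in>Iset. udvd x y)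
       \<and> (\<exists>x\<in>Iset. \<exists>y\<in>Iset. udvd y x)"
proof (intro conjI ballI)
  show "\<exists>y\<in>ucl (L n). udvd y x" if "x \<in> Iset" for x n using partA that by blast
  show "\<exists>y\<in>Iset. udvd x y" if "x \<in> ustar (L n)" for x n
    using partB that unfolding ustar_def ucl_def betaN_def by blast
  have "is_ultrafilter (principal 1)"
    unfolding is_ultrafilter_def principal_def Npos_def by auto
  then obtain v where v: "v \<in> Iset" using partB by blast
  hence "is_ultrafilter v" unfolding Iset_def ucl_def betaN_def by auto
  then obtain w where "w \<in> Iset" "udvd v w" using partB by blast
  thus "\<exists>x\<in>Iset. \<exists>y\<in>Iset. udvd y x" using v by blast
qed
end
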